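(* Let $\mathcal{D}=(X,\mathcal{B})$ be a $(v,k,\lambda)$ symmetric design of order $q=k-\lambda\geq 2$ and let $\Gamma_\mathcal{D}$ be its incidence graph. Then there exists a split resolving set for $\Gamma_\mathcal{D}$ of size $2\cdot\left\lceil\frac{v\log v}{k-\lambda}\right\rceil$.
   Context: A symmetric design with parameters $(v,k,\lambda)$ is a pair $(X,\mathcal{B})$ where $X$ is a set of $v$ points and $\mathcal{B}$ is a family of $k$-subsets of $X$ (blocks) such that any two distinct points lie in exactly $\lambda$ blocks and any two distinct blocks meet in exactly $\lambda$ points. Its order is $q=k-\lambda$. The incidence graph $\Gamma_\mathcal{D}$ is the bipartite graph on $X\cup\mathcal{B}$ with $x$ adjacent to $B$ iff $x\in B$. For a bipartite graph with bipartition $X\cup Y$, a split resolving set is a set $S=S_X\cup S_Y$ with $S_X\subseteq X$, $S_Y\subseteq Y$, such that any two distinct vertices of $X$ are at different distances from some vertex of $S_Y$, and any two distinct vertices of $Y$ are at different distances from some vertex of $S_X$. $\log$ is the natural logarithm. *)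

theory Defs
  imports Complex_Main "HOL-Library.Extended_Nat"
begin

definition symmetric_design :: "'a set \<Rightarrow> 'a set set \<Rightarrow> nat \<Rightarrow> nat \<Rightarrow> nat \<Rightarrow> bool" where
  "symmetric_design X B v k lam \<longleftrightarrow>
     finite X \<and> card X = v \<and> card B = v \<and>
     (\<forall>b\<in>B. b \<subseteq> X \<and> card b = k) \<and>
     (\<forall>x\<in>X. \<forall>y\<in>X. x \<noteq> y \<longrightarrow> card {b\<in>B. x \<in> b \<and> y \<in> b} = lam) \<and>
     (\<forall>b\<in>B. \<forall>c\<in>B. b \<noteq> c \<longrightarrow> card (b \<inter> c) = lam)"

definition inc_vertices :: "'a set \<Rightarrow> 'a set set \<Rightarrow> ('a + 'a set) set" where
  "inc_vertices X B = Inl ` X \<union> Inr ` B"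

fun inc_adj :: "'a set \<Rightarrow> 'a set set \<Rightarrow> ('a + 'a set) \<Rightarrow> ('a + 'a set) \<Rightarrow> bool" where
  "inc_adj X B (Inl x) (Inr b) = (x \<in> X \<and> b \<in> B \<and> x \<in> b)"
| "inc_adj X B (Inr b) (Inl x) = (x \<in> X \<and> b \<in> B \<and> x \<in> b)"
| "inc_adj X B _ _ = False"

definition inc_walk :: "'a set \<Rightarrow> 'a set set \<Rightarrow> nat \<Rightarrow> ('a + 'a set) \<Rightarrow> ('a + 'a set) \<Rightarrow> bool" where
  "inc_walk X B n u w \<longleftrightarrow> (\<exists>p :: nat \<Rightarrow> ('a + 'a set).
      p 0 = u \<and> p n = w \<and> u \<in> inc_vertices X B \<and> (\<forall>i<n. inc_adj X B (p i) (p (Suc i))))"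

definition inc_dist :: "'a set \<Rightarrow> 'a set set \<Rightarrow> ('a + 'a set) \<Rightarrow> ('a + 'a set) \<Rightarrow> enat" where
  "inc_dist X B u w = (if \<exists>n. inc_walk X B n u w then enat (LEAST n. inc_walk X B n u w) else \<infinity>)"

definition split_resolving :: "'a set \<Rightarrow> 'a set set \<Rightarrow> 'a set \<Rightarrow> 'a set set \<Rightarrow> bool" where
  "split_resolving X B SX SY \<longleftrightarrow> SX \<subseteq> X \<and> SY \<subseteq> B \<and>
     (\<forall>x\<in>X. \<forall>y\<in>X. x \<noteq> y \<longrightarrow>
        (\<exists>s\<in>SY. inc_dist X B (Inr s) (Inl x) \<noteq> inc_dist X B (Inr s) (Inl y))) \<and>
     (\<forall>b\<in>B. \<forall>c\<in>B. b \<noteq> c \<longrightarrow>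
        (\<exists>s\<in>SX. inc_dist X B (Inl s) (Inr b) \<noteq> inc_dist X B (Inl s) (Inr c)))"

end

theory Submission
  imports Defs "HOL-Library.FuncSet"
begin

lemma exp2_ge7: "7 \<le> exp (2::real)"
proof -
  have "exp 1 > (1 + 1/20) powr (20::real)" by (rule exp_1_gt_powr) simp
  hence a: "exp 1 > (21/20::real) ^ 20" by (simp add: powr_realpow)
  have "exp (2::real) = exp 1 ^ 2" using exp_of_nat_mult[of 2 1] by simp
  moreover have "((21/20::real) ^ 20)^2 \<le> exp 1 ^ 2"
    using a by (intro power_mono) auto
  moreover have "(7::real) \<le> ((21/20::real) ^ 20)^2" by (simp add: power_divide)
  ultimately show ?thesis by linarith
qed

lemma exp_poly: "2 \<le> q \<Longrightarrow> real (q^2+q+1) \<le> exp (real q)"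
proof (induction q rule: dec_induct)
  case base then show ?case using exp2_ge7 by simp
next
  case (step n)
  have e2: "2 \<le> exp (1::real)" using exp_ge_add_one_self[of 1] by simp
  have "exp (real (Suc n)) = exp 1 * exp (real n)" by (simp add: exp_add[symmetric])
  also have "\<dots> \<ge> 2 * real (n^2+n+1)"
    using step e2 by (intro mult_mono) auto
  finally have "exp (real (Suc n)) \<ge> 2 * real (n^2+n+1)" .
  moreover have "real (Suc n ^2 + Suc n + 1) \<le> 2 * real (n^2+n+1)"
  proof -
    have "2*n \<le> n*n" using step(1) by (intro mult_le_mono) auto
    have e1: "Suc n ^2 + Suc n + 1 = n*n + 3*n + 3" by (simp add: power2_eq_square)
    have e2: "2*(n^2+n+1) = 2*(n*n)+2*n+2" by (simp add: power2_eq_square)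
    have "Suc n ^2 + Suc n + 1 \<le> 2 * (n^2+n+1)" unfolding e1 e2 using \<open>2*n \<le> n*n\<close> step(1) by linarith
    thus ?thesis by (metis of_nat_le_iff of_nat_mult of_nat_numeral)
  qed
  ultimately show ?case by linarith
qed


lemma adj_neq: "inc_adj X B u w \<Longrightarrow> u \<noteq> w"
  by (cases u; cases w) auto

lemma walk1: "inc_walk X B 1 u w \<longleftrightarrow> u \<in> inc_vertices X B \<and> inc_adj X B u w"
  unfolding inc_walk_def
proof
  assume "\<exists>p. p 0 = u \<and> p 1 = w \<and> u \<in> inc_vertices X B \<and> (\<forall>i<1. inc_adj X B (p i) (p (Suc i)))"
  then show "u \<in> inc_vertices X B \<and> inc_adj X B u w" by auto
next
  assume h: "u \<in> inc_vertices X B \<and> inc_adj X B u w"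
  show "\<exists>p. p 0 = u \<and> p 1 = w \<and> u \<in> inc_vertices X B \<and> (\<forall>i<1. inc_adj X B (p i) (p (Suc i)))"
    by (rule exI[of _ "\<lambda>i. if i = 0 then u else w"]) (use h in auto)
qed

lemma walk0: "inc_walk X B 0 u w \<Longrightarrow> u = w"
  unfolding inc_walk_def by auto

lemma dist_one:
  assumes "u \<in> inc_vertices X B" "inc_adj X B u w"
  shows "inc_dist X B u w = 1"
proof -
  have w1: "inc_walk X B 1 u w" using assms walk1 by blast
  have n0: "\<not> inc_walk X B 0 u w" using walk0 adj_neq assms(2) by blast
  have "(LEAST n. inc_walk X B n u w) = 1"
  proof (rule Least_equality)
    show "inc_walk X B 1 u w" by (rule w1)
    fix y assume "inc_walk X B y u w" then show "1 \<le> y" using n0 by (cases y) auto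
  qed
  then show ?thesis unfolding inc_dist_def using w1 by (auto simp: one_enat_def)
qed

lemma dist_not_one:
  assumes "\<not> inc_adj X B u w"
  shows "inc_dist X B u w \<noteq> 1"
proof
  assume h: "inc_dist X B u w = 1"
  then have ex: "\<exists>n. inc_walk X B n u w" unfolding inc_dist_def by (auto split: if_splits)
  then have "(LEAST n. inc_walk X B n u w) = 1" using h unfolding inc_dist_def by (simp add: one_enat_def)
  then have "inc_walk X B 1 u w" using LeastI_ex[OF ex] by simp
  then show False using walk1 assms by blast
qed



lemma real_bound:
  fixes v q m :: nat
  assumes "2 \<le> v" "0 < q" "2*q \<le> v" "real v * ln (real v) / real q \<le> real m"
  shows "real v * (real v - 1) * (real v - 2*real q)^m < real v ^ m"
proof -
  define t where "t = 2 * real q / real v"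
  have vpos: "real v > 0" using assms by simp
  have t01: "0 \<le> 1 - t" using assms(3) vpos unfolding t_def by (simp add: field_simps)
  have eq: "real v - 2*real q = real v * (1 - t)" unfolding t_def using vpos by (simp add: field_simps)
  have "(1 - t)^m \<le> exp (-t)^m"
    using t01 exp_ge_add_one_self[of "-t"] by (intro power_mono) auto
  also have "\<dots> = exp (real m * (-t))" by (rule exp_of_nat_mult[symmetric])
  also have "\<dots> \<le> exp (- 2 * ln (real v))"
  proof -
    have "ln (real v) \<le> real m * real q / real v"
      using assms(4) assms(2) vpos by (simp add: field_simps)
    moreover have "real m * t = 2 * (real m * real q / real v)" unfolding t_def by simp
    ultimately have "- 2 * ln (real v) \<ge> real m * (-t)" by linarith
    then show ?thesis by simp
  qed
  also have "\<dots> = 1 / (real v)^2"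
  proof -
    have "exp (- 2 * ln (real v)) = exp (ln (real v)) powr (-2)"
      by (simp add: powr_def)
    also have "\<dots> = 1 / (real v)^2" using vpos by (simp add: powr_minus powr_realpow divide_inverse)
    finally show ?thesis .
  qed
  finally have b: "(1 - t)^m \<le> 1 / (real v)^2" .
  have "real v * (real v - 1) * (real v - 2*real q)^m = real v * (real v - 1) * (real v ^ m * (1-t)^m)"
    unfolding eq by (simp add: power_mult_distrib)
  also have "\<dots> \<le> real v * (real v - 1) * (real v ^ m * (1 / (real v)^2))"
    using b assms(1) by (intro mult_left_mono) auto
  also have "\<dots> = (real v - 1) / real v * real v ^ m" using vpos by (simp add: field_simps power2_eq_square)
  also have "\<dots> < real v ^ m"
    using vpos by (simp add: divide_less_eq)
  finally show ?thesis .
qed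


lemma exists_sep:
  fixes U :: "'u set" and P :: "'p set" and R :: "'u \<Rightarrow> 'p \<Rightarrow> bool" and q m v :: nat
  assumes fU: "finite U" and fP: "finite P" and cU: "card U = v" and cP: "card P = v"
    and q0: "0 < q"
    and sep: "\<forall>u\<in>U. \<forall>w\<in>U. u \<noteq> w \<longrightarrow> 2*q \<le> card {p\<in>P. R u p \<noteq> R w p}"
    and mlow: "real v * ln (real v) / real q \<le> real m" and mv: "m \<le> v"
  shows "\<exists>S. S \<subseteq> P \<and> card S = m \<and> (\<forall>u\<in>U. \<forall>w\<in>U. u \<noteq> w \<longrightarrow> (\<exists>s\<in>S. R u s \<noteq> R w s))"
proof (cases "v \<le> 1")
  case True
  then have nopair: "\<forall>u\<in>U. \<forall>w\<in>U. u = w" using cU fU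
    using card_le_Suc0_iff_eq[OF fU] by auto
  obtain S where "{} \<subseteq> S" "S \<subseteq> P" "card S = m"
    using exists_subset_between[of "{}" m P] mv cP fP by auto
  then show ?thesis using nopair by blast
next
  case False
  then have v2: "2 \<le> v" by simp
  obtain u0 w0 where uw: "u0 \<in> U" "w0 \<in> U" "u0 \<noteq> w0"
  proof -
    have "\<not> (\<forall>u\<in>U. \<forall>w\<in>U. u = w)" using card_le_Suc0_iff_eq[OF fU] v2 cU by auto
    then show ?thesis using that by blast
  qed
  have "card {p\<in>P. R u0 p \<noteq> R w0 p} \<le> v" using cP fP card_mono[OF fP, of "{p\<in>P. R u0 p \<noteq> R w0 p}"] by auto
  then have qv: "2*q \<le> v" using sep uw by force
  define F where "F = PiE {..<m} (\<lambda>_. P)"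
  define Bad where "Bad u w = PiE {..<m} (\<lambda>_. {p\<in>P. R u p = R w p})" for u w
  have cF: "card F = v^m" unfolding F_def by (simp add: card_PiE cP)
  have cBad: "card (Bad u w) \<le> (v - 2*q)^m" if "u \<in> U" "w \<in> U" "u \<noteq> w" for u w
  proof -
    have "card {p\<in>P. R u p = R w p} + card {p\<in>P. R u p \<noteq> R w p} = v"
    proof -
      have "{p\<in>P. R u p = R w p} \<union> {p\<in>P. R u p \<noteq> R w p} = P" by auto
      moreover have "{p\<in>P. R u p = R w p} \<inter> {p\<in>P. R u p \<noteq> R w p} = {}" by auto
      ultimately show ?thesis using fP cP card_Un_disjoint[of "{p\<in>P. R u p = R w p}" "{p\<in>P. R u p \<noteq> R w p}"]
        by auto
    qed
    then have "card {p\<in>P. R u p = R w p} \<le> v - 2*q" using sep that by force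
    then have h: "card {p\<in>P. R u p = R w p} ^ m \<le> (v - 2*q)^m" by (rule power_mono) simp
    have "card (Bad u w) = card {p\<in>P. R u p = R w p} ^ m" unfolding Bad_def by (simp add: card_PiE)
    then show ?thesis using h by simp
  qed
  define UB where "UB = (\<Union>u\<in>U. \<Union>w\<in>U-{u}. Bad u w)"
  have "card UB \<le> (\<Sum>u\<in>U. card (\<Union>w\<in>U-{u}. Bad u w))"
    unfolding UB_def using fU by (rule card_UN_le)
  also have "\<dots> \<le> (\<Sum>u\<in>U. (\<Sum>w\<in>U-{u}. card (Bad u w)))"
    using fU by (intro sum_mono card_UN_le) auto
  also have "\<dots> \<le> (\<Sum>u\<in>U. (\<Sum>w\<in>U-{u}. (v - 2*q)^m))"
    using cBad by (intro sum_mono) auto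
  also have "\<dots> = (\<Sum>u\<in>U. (v - 1) * (v - 2*q)^m)"
  proof (rule sum.cong)
    fix u assume "u \<in> U"
    then have "card (U - {u}) = v - 1" using cU fU by (simp add: card_Diff_singleton)
    then show "(\<Sum>w\<in>U-{u}. (v - 2*q)^m) = (v - 1) * (v - 2*q)^m" by simp
  qed simp
  also have "\<dots> = v * ((v - 1) * (v - 2*q)^m)" using cU by simp
  finally have cUB: "card UB \<le> v * ((v - 1) * (v - 2*q)^m)" .
  have "real (v * ((v - 1) * (v - 2*q)^m)) = real v * (real v - 1) * (real v - 2*real q)^m"
  proof -
    have a: "real (v - 2*q) = real v - 2*real q" using qv by (simp add: of_nat_diff)
    have b: "real (v - 1) = real v - 1" using v2 by (simp add: of_nat_diff)
    show ?thesis unfolding of_nat_mult of_nat_power a b by simp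
  qed
  also have "\<dots> < real v ^ m" using real_bound[OF v2 q0 qv mlow] .
  finally have "real (v * ((v - 1) * (v - 2*q)^m)) < real v ^ m" .
  then have "real (v * ((v - 1) * (v - 2*q)^m)) < real (v ^ m)" by (simp only: of_nat_power)
  then have "v * ((v - 1) * (v - 2*q)^m) < v^m" by (simp only: of_nat_less_iff)
  with cUB cF have "card UB < card F" by simp
  have "\<not> F \<subseteq> UB"
  proof
    assume "F \<subseteq> UB"
    moreover have "finite UB" unfolding UB_def Bad_def using fU fP
      by (intro finite_UN_I finite_Diff finite_PiE) auto
    ultimately have "card F \<le> card UB" by (rule card_mono[rotated])
    then show False using \<open>card UB < card F\<close> by simp
  qed
  then obtain f where fF: "f \<in> F" and fUB: "f \<notin> UB" by blast
  define S0 where "S0 = f ` {..<m}"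
  have fF': "(\<forall>i\<in>{..<m}. f i \<in> P) \<and> f \<in> extensional {..<m}" using fF unfolding F_def PiE_iff .
  have S0P: "S0 \<subseteq> P" using fF' unfolding S0_def by blast
  have cS0: "card S0 \<le> m" unfolding S0_def using card_image_le[of "{..<m}" f] by simp
  have sepS0: "\<exists>s\<in>S0. R u s \<noteq> R w s" if "u \<in> U" "w \<in> U" "u \<noteq> w" for u w
  proof (rule ccontr)
    assume "\<not> (\<exists>s\<in>S0. R u s \<noteq> R w s)"
    then have "\<forall>i\<in>{..<m}. f i \<in> {p\<in>P. R u p = R w p}" using fF' unfolding S0_def by blast
    then have "f \<in> Bad u w" using fF' unfolding Bad_def PiE_iff by blast
    then have "f \<in> UB" unfolding UB_def using that by blast
    then show False using fUB by simp
  qed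
  have mP: "m \<le> card P" using mv cP by simp
  obtain S where S: "S0 \<subseteq> S" "S \<subseteq> P" "card S = m"
    using exists_subset_between[OF cS0 mP S0P fP] by blast
  have "\<forall>u\<in>U. \<forall>w\<in>U. u \<noteq> w \<longrightarrow> (\<exists>s\<in>S. R u s \<noteq> R w s)"
  proof (intro ballI impI)
    fix u w assume "u \<in> U" "w \<in> U" "u \<noteq> w"
    then obtain s where "s \<in> S0" "R u s \<noteq> R w s" using sepS0 by blast
    then show "\<exists>s\<in>S. R u s \<noteq> R w s" using S(1) by blast
  qed
  then show ?thesis using S(2,3) by blast
qed


lemma card_filter_sum: "finite C \<Longrightarrow> card {c\<in>C. Q c} = (\<Sum>c\<in>C. if Q c then 1 else 0)"
  by (simp add: sum.If_cases Int_def conj_commute)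

lemma double_count:
  assumes "finite A" "finite C"
  shows "(\<Sum>a\<in>A. card {c\<in>C. Q a c}) = (\<Sum>c\<in>C. card {a\<in>A. Q a c})"
  using assms by (simp add: card_filter_sum sum.swap[of _ A C])

locale sdes =
  fixes X :: "'a set" and B :: "'a set set" and v k lam :: nat
  assumes des: "symmetric_design X B v k lam" and q2: "k - lam \<ge> 2"
begin

lemma fX: "finite X" and cX: "card X = v" and cB: "card B = v"
  and bX: "\<And>b. b \<in> B \<Longrightarrow> b \<subseteq> X" and bk: "\<And>b. b \<in> B \<Longrightarrow> card b = k"
  and plam: "\<And>x y. x \<in> X \<Longrightarrow> y \<in> X \<Longrightarrow> x \<noteq> y \<Longrightarrow> card {b\<in>B. x \<in> b \<and> y \<in> b} = lam"
  and blam: "\<And>b c. b \<in> B \<Longrightarrow> c \<in> B \<Longrightarrow> b \<noteq> c \<Longrightarrow> card (b \<inter> c) = lam"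
  using des unfolding symmetric_design_def by auto

lemma fB: "finite B"
proof -
  have "B \<subseteq> Pow X" using bX by auto
  then show ?thesis using fX finite_subset by blast
qed

lemma k2: "k \<ge> 2" using q2 by simp

lemma rep_eq: "x \<in> X \<Longrightarrow> card {b\<in>B. x \<in> b} * (k - 1) = lam * (v - 1)"
proof -
  assume x: "x \<in> X"
  have "(\<Sum>y\<in>X-{x}. card {b\<in>B. x \<in> b \<and> y \<in> b}) = (\<Sum>y\<in>X-{x}. lam)"
    using plam x by (intro sum.cong) auto
  also have "\<dots> = lam * (v - 1)" using x fX cX by (simp add: card_Diff_singleton)
  finally have a: "(\<Sum>y\<in>X-{x}. card {b\<in>B. x \<in> b \<and> y \<in> b}) = lam * (v - 1)" .
  have "(\<Sum>y\<in>X-{x}. card {b\<in>B. x \<in> b \<and> y \<in> b}) = (\<Sum>b\<in>B. card {y\<in>X-{x}. x \<in> b \<and> y \<in> b})"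
    using fX fB by (intro double_count) auto
  also have "\<dots> = (\<Sum>b\<in>B. if x \<in> b then k - 1 else 0)"
  proof (rule sum.cong)
    fix b assume b: "b \<in> B"
    show "card {y\<in>X-{x}. x \<in> b \<and> y \<in> b} = (if x \<in> b then k - 1 else 0)"
    proof (cases "x \<in> b")
      case True
      have "{y\<in>X-{x}. x \<in> b \<and> y \<in> b} = b - {x}" using bX[OF b] True by auto
      moreover have "finite b" using bX[OF b] fX finite_subset by blast
      ultimately show ?thesis using True bk[OF b] by (simp add: card_Diff_singleton)
    qed simp
  qed simp
  also have "\<dots> = (\<Sum>b\<in>B. (if x \<in> b then 1 else 0) * (k - 1))" by (rule sum.cong) auto
  also have "\<dots> = card {b\<in>B. x \<in> b} * (k - 1)" using fB by (simp only: card_filter_sum sum_distrib_right)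
  finally show ?thesis using a by simp
qed

lemma inc_sum: "(\<Sum>x\<in>X. card {b\<in>B. x \<in> b}) = v * k"
proof -
  have "(\<Sum>x\<in>X. card {b\<in>B. x \<in> b}) = (\<Sum>b\<in>B. card {x\<in>X. x \<in> b})"
    using fX fB by (rule double_count)
  also have "\<dots> = (\<Sum>b\<in>B. k)"
  proof (rule sum.cong)
    fix b assume b: "b \<in> B"
    have "{x\<in>X. x \<in> b} = b" using bX[OF b] by auto
    then show "card {x\<in>X. x \<in> b} = k" using bk[OF b] by simp
  qed simp
  also have "\<dots> = v * k" using cB by simp
  finally show ?thesis .
qed

lemma rep_k: assumes "x \<in> X" shows "card {b\<in>B. x \<in> b} = k"
proof -
  define r where "r = card {b\<in>B. x \<in> b}"
  have all: "card {b\<in>B. y \<in> b} = r" if "y \<in> X" for y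
  proof -
    have "card {b\<in>B. y \<in> b} * (k - 1) = r * (k - 1)"
      using rep_eq[OF that] rep_eq[OF assms] unfolding r_def by simp
    then show ?thesis using k2 by simp
  qed
  have "(\<Sum>y\<in>X. card {b\<in>B. y \<in> b}) = (\<Sum>y\<in>X. r)" using all by (intro sum.cong) auto
  moreover have "(\<Sum>y\<in>X. r) = v * r" using cX by simp
  ultimately have "v * r = v * k" using inc_sum by linarith
  moreover have "v > 0" using assms fX cX card_gt_0_iff by blast
  ultimately have "r = k" by simp
  then show ?thesis unfolding r_def .
qed

lemma fisher: assumes "x \<in> X" shows "lam * (v - 1) = k * (k - 1)"
  using rep_eq[OF assms] rep_k[OF assms] by simp

lemma v_bound: assumes "2 \<le> v" shows "v \<le> (k - lam)^2 + (k - lam) + 1"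
proof -
  obtain x where x: "x \<in> X" using assms cX fX by (metis card.empty ex_in_conv not_numeral_le_zero)
  have f: "lam * (v - 1) = k * (k - 1)" by (rule fisher[OF x])
  define L where "L = int lam"
  define K where "K = int k"
  define V where "V = int v"
  define Q where "Q = int (k - lam)"
  have QKL: "Q = K - L" using q2 unfolding Q_def K_def L_def by simp
  have Q2: "Q \<ge> 2" using q2 unfolding Q_def by simp
  have fi: "L * (V - 1) = K * (K - 1)"
  proof -
    have "int (lam * (v - 1)) = int (k * (k - 1))" using f by simp
    then show ?thesis unfolding L_def V_def K_def using assms k2 by (simp add: of_nat_diff)
  qed
  define W where "W = V - 2*K + L"
  have LW: "L * W = Q * Q - Q" unfolding W_def QKL using fi by (simp add: algebra_simps)
  have "2*Q \<le> Q*Q" using Q2 by (intro mult_right_mono) auto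
  then have "Q * Q - Q \<ge> 2" using Q2 by linarith
  then have LWpos: "L * W > 0" using LW by simp
  have L0: "L \<ge> 0" unfolding L_def by simp
  have "L \<noteq> 0" using LWpos by auto
  then have Lpos: "L \<ge> 1" using L0 by linarith
  have Wpos: "W \<ge> 1"
  proof (rule ccontr)
    assume "\<not> W \<ge> 1"
    then have "W \<le> 0" by simp
    then have "L * W \<le> 0" using L0 by (rule mult_nonneg_nonpos[rotated])
    then show False using LWpos by simp
  qed
  have "(L - 1) * (W - 1) \<ge> 0" using Lpos Wpos by simp
  then have "L + W \<le> L * W + 1" by (simp add: algebra_simps)
  moreover have "V = 2*Q + L + W" unfolding W_def QKL by simp
  ultimately have "V \<le> Q*Q + Q + 1" using LW by linarith
  then have "int v \<le> int ((k - lam)^2 + (k - lam) + 1)" unfolding V_def Q_def by (simp add: power2_eq_square)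
  then show ?thesis by (simp only: of_nat_le_iff)
qed

lemma pt_sep: assumes "x \<in> X" "y \<in> X" "x \<noteq> y"
  shows "2 * (k - lam) \<le> card {b\<in>B. (x \<in> b) \<noteq> (y \<in> b)}"
proof -
  have one: "card {b\<in>B. x \<in> b \<and> y \<notin> b} = k - lam" if "x \<in> X" "y \<in> X" "x \<noteq> y" for x y
  proof -
    have "{b\<in>B. x \<in> b} = {b\<in>B. x \<in> b \<and> y \<in> b} \<union> {b\<in>B. x \<in> b \<and> y \<notin> b}" by auto
    moreover have "{b\<in>B. x \<in> b \<and> y \<in> b} \<inter> {b\<in>B. x \<in> b \<and> y \<notin> b} = {}" by auto
    ultimately have "card {b\<in>B. x \<in> b} = card {b\<in>B. x \<in> b \<and> y \<in> b} + card {b\<in>B. x \<in> b \<and> y \<notin> b}"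
      using fB by (simp add: card_Un_disjoint)
    then show ?thesis using rep_k[OF that(1)] plam[OF that] by simp
  qed
  have "{b\<in>B. (x \<in> b) \<noteq> (y \<in> b)} = {b\<in>B. x \<in> b \<and> y \<notin> b} \<union> {b\<in>B. y \<in> b \<and> x \<notin> b}" by auto
  moreover have "{b\<in>B. x \<in> b \<and> y \<notin> b} \<inter> {b\<in>B. y \<in> b \<and> x \<notin> b} = {}" by auto
  ultimately have "card {b\<in>B. (x \<in> b) \<noteq> (y \<in> b)} = card {b\<in>B. x \<in> b \<and> y \<notin> b} + card {b\<in>B. y \<in> b \<and> x \<notin> b}"
    using fB by (simp add: card_Un_disjoint)
  then show ?thesis using one[OF assms] one[OF assms(2,1)] assms(3) by simp
qed

lemma bl_sep: assumes "b \<in> B" "c \<in> B" "b \<noteq> c"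
  shows "2 * (k - lam) \<le> card {s\<in>X. (s \<in> b) \<noteq> (s \<in> c)}"
proof -
  have fb: "finite b" "finite c" using bX assms fX finite_subset by blast+
  have "{s\<in>X. (s \<in> b) \<noteq> (s \<in> c)} = (b - c) \<union> (c - b)" using bX assms by auto
  moreover have "(b - c) \<inter> (c - b) = {}" by auto
  ultimately have "card {s\<in>X. (s \<in> b) \<noteq> (s \<in> c)} = card (b - c) + card (c - b)"
    using fb by (simp add: card_Un_disjoint)
  moreover have "card (b - c) = k - lam" using card_Diff_subset_Int[of b c] fb bk[OF assms(1)] blam[OF assms] by simp
  moreover have "card (c - b) = k - lam" using card_Diff_subset_Int[of c b] fb bk[OF assms(2)] blam[OF assms(2,1)] assms(3)
    by (simp add: Int_commute)
  ultimately show ?thesis by simp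
qed

end

lemma dist_pt: "s \<in> B \<Longrightarrow> x \<in> X \<Longrightarrow> (inc_dist X B (Inr s) (Inl x) = 1) \<longleftrightarrow> x \<in> s"
  using dist_one[of "Inr s" X B "Inl x"] dist_not_one[of X B "Inr s" "Inl x"]
  by (auto simp: inc_vertices_def)

lemma dist_bl: "s \<in> X \<Longrightarrow> b \<in> B \<Longrightarrow> (inc_dist X B (Inl s) (Inr b) = 1) \<longleftrightarrow> s \<in> b"
  using dist_one[of "Inl s" X B "Inr b"] dist_not_one[of X B "Inl s" "Inr b"]
  by (auto simp: inc_vertices_def)

theorem corollary2p6:
  fixes X :: "'a set" and B :: "'a set set" and v k lam :: nat
  assumes "symmetric_design X B v k lam"
    and "k - lam \<ge> 2"
  shows "\<exists>SX SY. split_resolving X B SX SY \<and>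
           card SX + card SY = 2 * nat \<lceil>real v * ln (real v) / real (k - lam)\<rceil>"
proof -
  interpret sdes X B v k lam using assms by unfold_locales
  define q where "q = k - lam"
  define x where "x = real v * ln (real v) / real q"
  define m where "m = nat \<lceil>x\<rceil>"
  have q0: "0 < q" using assms(2) unfolding q_def by simp
  have xnn: "0 \<le> x"
  proof (cases "v = 0")
    case False
    then have "0 \<le> ln (real v)" by simp
    then show ?thesis unfolding x_def by simp
  qed (simp add: x_def)
  have mlow: "real v * ln (real v) / real q \<le> real m"
  proof -
    have "x \<le> of_int \<lceil>x\<rceil>" by (rule le_of_int_ceiling)
    moreover have "real m = of_int \<lceil>x\<rceil>" unfolding m_def using xnn by simp
    ultimately show ?thesis unfolding x_def by simp
  qed
  have mv: "m \<le> v"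
  proof (cases "v \<le> 1")
    case True
    then have "v = 0 \<or> v = 1" by auto
    then have "x = 0" unfolding x_def by auto
    then show ?thesis unfolding m_def by simp
  next
    case False
    then have v2: "2 \<le> v" by simp
    have "real v \<le> real (q^2 + q + 1)" using v_bound[OF v2] unfolding q_def by (simp only: of_nat_le_iff)
    also have "\<dots> \<le> exp (real q)" using exp_poly assms(2) unfolding q_def by blast
    finally have "ln (real v) \<le> ln (exp (real q))" using v2 by (subst ln_le_cancel_iff) auto
    then have "ln (real v) \<le> real q" by simp
    then have "real v * ln (real v) \<le> real v * real q" by (intro mult_left_mono) auto
    then have xv: "x \<le> real v" unfolding x_def using q0 by (simp add: divide_le_eq)
    then show ?thesis unfolding m_def using xv by simp
  qed
  have sepP: "\<forall>u\<in>X. \<forall>w\<in>X. u \<noteq> w \<longrightarrow> 2*q \<le> card {p\<in>B. (u \<in> p) \<noteq> (w \<in> p)}"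
    using pt_sep unfolding q_def by blast
  have sepB: "\<forall>u\<in>B. \<forall>w\<in>B. u \<noteq> w \<longrightarrow> 2*q \<le> card {p\<in>X. (p \<in> u) \<noteq> (p \<in> w)}"
    using bl_sep unfolding q_def by blast
  obtain SY where SY: "SY \<subseteq> B" "card SY = m"
    "\<forall>u\<in>X. \<forall>w\<in>X. u \<noteq> w \<longrightarrow> (\<exists>s\<in>SY. (u \<in> s) \<noteq> (w \<in> s))"
    using exists_sep[of X B v q "\<lambda>u p. u \<in> p" m, OF fX fB cX cB q0 sepP mlow mv] by blast
  obtain SX where SX: "SX \<subseteq> X" "card SX = m"
    "\<forall>u\<in>B. \<forall>w\<in>B. u \<noteq> w \<longrightarrow> (\<exists>s\<in>SX. (s \<in> u) \<noteq> (s \<in> w))"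
    using exists_sep[of B X v q "\<lambda>u p. p \<in> u" m, OF fB fX cB cX q0 sepB mlow mv] by blast
  have "split_resolving X B SX SY"
    unfolding split_resolving_def
  proof (intro conjI ballI impI)
    show "SX \<subseteq> X" "SY \<subseteq> B" using SX SY by auto
  next
    fix u w assume uw: "u \<in> X" "w \<in> X" "u \<noteq> w"
    then obtain s where s: "s \<in> SY" "(u \<in> s) \<noteq> (w \<in> s)" using SY(3) by blast
    have sB: "s \<in> B" using s SY(1) by auto
    show "\<exists>s\<in>SY. inc_dist X B (Inr s) (Inl u) \<noteq> inc_dist X B (Inr s) (Inl w)"
      using s dist_pt[OF sB uw(1)] dist_pt[OF sB uw(2)] by metis
  next
    fix b c assume bc: "b \<in> B" "c \<in> B" "b \<noteq> c"
    then obtain s where s: "s \<in> SX" "(s \<in> b) \<noteq> (s \<in> c)" using SX(3) by blast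
    have sX: "s \<in> X" using s SX(1) by auto
    show "\<exists>s\<in>SX. inc_dist X B (Inl s) (Inr b) \<noteq> inc_dist X B (Inl s) (Inr c)"
      using s dist_bl[OF sX bc(1)] dist_bl[OF sX bc(2)] by metis
  qed
  moreover have "card SX + card SY = 2 * nat \<lceil>real v * ln (real v) / real (k - lam)\<rceil>"
    using SX(2) SY(2) unfolding m_def x_def q_def by simp
  ultimately show ?thesis by blast
qed

end
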